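(* Let $(W,R)$ be an $L5$-frame, let $g\colon V\to\mathrm{Pow}(W)$ be an assignment in $(W,R)$, and let $w_T\in W$ be an $R$-maximal element of $W$. Then there exist an $L5$-model $\mathcal{M}$ and an assignment $\gamma\colon V\to M$ such that for all formulas $\varphi$: $$(\mathcal{M},\gamma)\vDash\varphi\iff (w_T,g)\vDash\varphi.$$
   Context: Formulas are built from a countable set $V$ of propositional variables using $\wedge,\vee,\rightarrow,\bot$ and the unary modal operator $\square$; $\top$ abbreviates $\bot\rightarrow\bot$. An $L5$-frame is a pair $(W,R)$ with the following properties: - $W$ is a non-empty set; - $R$ is a partial order on $W$; - there is an $R$-smallest element $w_B$ (the bottom world); - every $R$-chain has an upper bound in $W$. An assignment in $(W,R)$ is a map $g\colon V\to\mathrm{Pow}(W)$ with $wRw'$ and $w\in g(x)$ implying $w'\in g(x)$. Kripke satisfaction is defined as follows: - $(w,g)\nvDash\bot$; - $(w,g)\vDash x$ iff $w\in g(x)$; - $\vee,\wedge$ are evaluated pointwise; - $(w,g)\vDash\varphi\rightarrow\psi$ iff for all $w'$ with $wRw'$, $(w',g)\vDash\varphi$ implies $(w',g)\vDash\psi$; - $(w,g)\vDash\square\varphi$ iff $(w_B,g)\vDash\varphi$. An $L5$-model is a structure $\mathcal{M}=(M,\mathit{TRUE},f_\bot,f_\top,f_\rightarrow,f_\vee,f_\wedge,f_\square)$ such that $(M,f_\bot,f_\top,f_\rightarrow,f_\vee,f_\wedge)$ is a Heyting algebra (lattice order $\le$). Moreover, $\mathit{TRUE}\subseteq M$ is an ultrafilter,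 and $f_\square\colon M\to M$ satisfies, for all $m,m',m''\in M$: (i) $f_\square(m)\le m$; (ii) $f_\square(f_\rightarrow(m,m'))\le f_\rightarrow(f_\square(f_\rightarrow(m',m'')),f_\square(f_\rightarrow(m,m'')))$; (iii) $f_\square(f_\vee(m,m'))\le f_\vee(f_\square(m),f_\square(m'))$; (iv) $f_\square(m)\in\mathit{TRUE}$ iff $m=f_\top$; (v) $f_\square(m)=f_\top$ if $m=f_\top$, and $f_\square(m)=f_\bot$ otherwise. An assignment $\gamma\colon V\to M$ extends to all formulas by: - $\gamma(\bot)=f_\bot$; - $\gamma(\square\varphi)=f_\square(\gamma(\varphi))$; - $\gamma(\varphi*\psi)=f_*(\gamma(\varphi),\gamma(\psi))$ for $*\in\{\vee,\wedge,\rightarrow\}$. Satisfaction is $(\mathcal{M},\gamma)\vDash\varphi$ iff $\gamma(\varphi)\in\mathit{TRUE}$. *)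

theory Defs
  imports Main "HOL-Library.Countable"
begin

datatype 'v form =
    Var 'v
  | Bot
  | And "'v form" "'v form"
  | Or "'v form" "'v form"
  | Imp "'v form" "'v form"
  | Box "'v form"

definition Top :: "'v form" where "Top = Imp Bot Bot"

definition l5_frame :: "'w set \<Rightarrow> ('w \<Rightarrow> 'w \<Rightarrow> bool) \<Rightarrow> bool" where
  "l5_frame W R \<longleftrightarrow>
     W \<noteq> {} \<and>
     (\<forall>x y. R x y \<longrightarrow> x \<in> W \<and> y \<in> W) \<and>
     (\<forall>x\<in>W. R x x) \<and>
     (\<forall>x y z. R x y \<longrightarrow> R y z \<longrightarrow> R x z) \<and>
     (\<forall>x y. R x y \<longrightarrow> R y x \<longrightarrow> x = y) \<and>
     (\<exists>b\<in>W. \<forall>w\<in>W. R b w) \<and>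
     (\<forall>C. C \<subseteq> W \<longrightarrow> (\<forall>x\<in>C. \<forall>y\<in>C. R x y \<or> R y x) \<longrightarrow>
        (\<exists>u\<in>W. \<forall>x\<in>C. R x u))"

definition bottom_world :: "'w set \<Rightarrow> ('w \<Rightarrow> 'w \<Rightarrow> bool) \<Rightarrow> 'w" where
  "bottom_world W R = (THE b. b \<in> W \<and> (\<forall>w\<in>W. R b w))"

definition frame_assignment ::
  "'w set \<Rightarrow> ('w \<Rightarrow> 'w \<Rightarrow> bool) \<Rightarrow> ('v \<Rightarrow> 'w set) \<Rightarrow> bool" where
  "frame_assignment W R g \<longleftrightarrow>
     (\<forall>x. g x \<subseteq> W) \<and> (\<forall>x w w'. R w w' \<longrightarrow> w \<in> g x \<longrightarrow> w' \<in> g x)"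

fun ksat :: "'w set \<Rightarrow> ('w \<Rightarrow> 'w \<Rightarrow> bool) \<Rightarrow> ('v \<Rightarrow> 'w set) \<Rightarrow> 'w \<Rightarrow> 'v form \<Rightarrow> bool" where
  "ksat W R g w Bot = False"
| "ksat W R g w (Var x) = (w \<in> g x)"
| "ksat W R g w (And \<phi> \<psi>) = (ksat W R g w \<phi> \<and> ksat W R g w \<psi>)"
| "ksat W R g w (Or \<phi> \<psi>) = (ksat W R g w \<phi> \<or> ksat W R g w \<psi>)"
| "ksat W R g w (Imp \<phi> \<psi>) =
     (\<forall>w'. R w w' \<longrightarrow> ksat W R g w' \<phi> \<longrightarrow> ksat W R g w' \<psi>)"
| "ksat W R g w (Box \<phi>) = ksat W R g (bottom_world W R) \<phi>"

definition r_maximal :: "'w set \<Rightarrow> ('w \<Rightarrow> 'w \<Rightarrow> bool) \<Rightarrow> 'w \<Rightarrow> bool" where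
  "r_maximal W R wT \<longleftrightarrow> wT \<in> W \<and> (\<forall>w\<in>W. R wT w \<longrightarrow> w = wT)"

definition hle :: "('m \<Rightarrow> 'm \<Rightarrow> 'm) \<Rightarrow> 'm \<Rightarrow> 'm \<Rightarrow> bool" where
  "hle fand a b \<longleftrightarrow> fand a b = a"

definition heyting_algebra ::
  "'m set \<Rightarrow> 'm \<Rightarrow> 'm \<Rightarrow> ('m \<Rightarrow> 'm \<Rightarrow> 'm) \<Rightarrow> ('m \<Rightarrow> 'm \<Rightarrow> 'm) \<Rightarrow> ('m \<Rightarrow> 'm \<Rightarrow> 'm) \<Rightarrow> bool" where
  "heyting_algebra M fbot ftop fimp for fand \<longleftrightarrow>
     fbot \<in> M \<and> ftop \<in> M \<and>
     (\<forall>a\<in>M. \<forall>b\<in>M. fimp a b \<in> M \<and> for a b \<in> M \<and> fand a b \<in> M) \<and>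
     (\<forall>a\<in>M. \<forall>b\<in>M. for a b = for b a \<and> fand a b = fand b a) \<and>
     (\<forall>a\<in>M. \<forall>b\<in>M. \<forall>c\<in>M. for (for a b) c = for a (for b c) \<and>
                              fand (fand a b) c = fand a (fand b c)) \<and>
     (\<forall>a\<in>M. \<forall>b\<in>M. for a (fand a b) = a \<and> fand a (for a b) = a) \<and>
     (\<forall>a\<in>M. hle fand fbot a \<and> hle fand a ftop) \<and>
     (\<forall>a\<in>M. \<forall>b\<in>M. \<forall>c\<in>M. hle fand (fand a b) c \<longleftrightarrow> hle fand a (fimp b c))"

definition hfilter :: "'m set \<Rightarrow> 'm \<Rightarrow> ('m \<Rightarrow> 'm \<Rightarrow> 'm) \<Rightarrow> 'm set \<Rightarrow> bool" where
  "hfilter M ftop fand F \<longleftrightarrow>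
     F \<subseteq> M \<and> ftop \<in> F \<and>
     (\<forall>a\<in>F. \<forall>b\<in>F. fand a b \<in> F) \<and>
     (\<forall>a\<in>F. \<forall>b\<in>M. hle fand a b \<longrightarrow> b \<in> F)"

definition ultrafilter ::
  "'m set \<Rightarrow> 'm \<Rightarrow> 'm \<Rightarrow> ('m \<Rightarrow> 'm \<Rightarrow> 'm) \<Rightarrow> 'm set \<Rightarrow> bool" where
  "ultrafilter M fbot ftop fand U \<longleftrightarrow>
     hfilter M ftop fand U \<and> fbot \<notin> U \<and>
     (\<forall>F. hfilter M ftop fand F \<longrightarrow> fbot \<notin> F \<longrightarrow> U \<subseteq> F \<longrightarrow> F = U)"

definition l5_model ::
  "'m set \<Rightarrow> 'm set \<Rightarrow> 'm \<Rightarrow> 'm \<Rightarrow> ('m \<Rightarrow> 'm \<Rightarrow> 'm) \<Rightarrow> ('m \<Rightarrow> 'm \<Rightarrow> 'm)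
    \<Rightarrow> ('m \<Rightarrow> 'm \<Rightarrow> 'm) \<Rightarrow> ('m \<Rightarrow> 'm) \<Rightarrow> bool" where
  "l5_model M TRUE fbot ftop fimp for fand fbox \<longleftrightarrow>
     heyting_algebra M fbot ftop fimp for fand \<and>
     ultrafilter M fbot ftop fand TRUE \<and>
     (\<forall>m\<in>M. fbox m \<in> M) \<and>
     (\<forall>m\<in>M. hle fand (fbox m) m) \<and>
     (\<forall>m\<in>M. \<forall>m'\<in>M. \<forall>m''\<in>M.
        hle fand (fbox (fimp m m')) (fimp (fbox (fimp m' m'')) (fbox (fimp m m'')))) \<and>
     (\<forall>m\<in>M. \<forall>m'\<in>M. hle fand (fbox (for m m')) (for (fbox m) (fbox m'))) \<and>
     (\<forall>m\<in>M. fbox m \<in> TRUE \<longleftrightarrow> m = ftop) \<and>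
     (\<forall>m\<in>M. fbox m = (if m = ftop then ftop else fbot))"

fun meval :: "'m \<Rightarrow> ('m \<Rightarrow> 'm \<Rightarrow> 'm) \<Rightarrow> ('m \<Rightarrow> 'm \<Rightarrow> 'm) \<Rightarrow> ('m \<Rightarrow> 'm \<Rightarrow> 'm)
    \<Rightarrow> ('m \<Rightarrow> 'm) \<Rightarrow> ('v \<Rightarrow> 'm) \<Rightarrow> 'v form \<Rightarrow> 'm" where
  "meval fbot fimp for fand fbox \<gamma> Bot = fbot"
| "meval fbot fimp for fand fbox \<gamma> (Var x) = \<gamma> x"
| "meval fbot fimp for fand fbox \<gamma> (Box \<phi>) = fbox (meval fbot fimp for fand fbox \<gamma> \<phi>)"
| "meval fbot fimp for fand fbox \<gamma> (And \<phi> \<psi>) =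
     fand (meval fbot fimp for fand fbox \<gamma> \<phi>) (meval fbot fimp for fand fbox \<gamma> \<psi>)"
| "meval fbot fimp for fand fbox \<gamma> (Or \<phi> \<psi>) =
     for (meval fbot fimp for fand fbox \<gamma> \<phi>) (meval fbot fimp for fand fbox \<gamma> \<psi>)"
| "meval fbot fimp for fand fbox \<gamma> (Imp \<phi> \<psi>) =
     fimp (meval fbot fimp for fand fbox \<gamma> \<phi>) (meval fbot fimp for fand fbox \<gamma> \<psi>)"

end

theory Submission
  imports Defs
begin

lemma persist:
  assumes fr: "l5_frame W R" and ga: "frame_assignment W R g"
  shows "R w w' \<Longrightarrow> ksat W R g w \<phi> \<Longrightarrow> ksat W R g w' \<phi>"
proof (induction \<phi> arbitrary: w w')
  case (Var x)
  have "w \<in> g x" using Var.prems(2) by simp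
  then have "w' \<in> g x" using ga Var.prems(1) unfolding frame_assignment_def by blast
  then show ?case by simp
next
  case Bot then show ?case by simp
next
  case (And a b) then show ?case by (metis ksat.simps(3))
next
  case (Or a b) then show ?case by (metis ksat.simps(4))
next
  case (Box a) then show ?case by simp
next
  case (Imp a b)
  have "\<forall>x y z. R x y \<longrightarrow> R y z \<longrightarrow> R x z" using fr unfolding l5_frame_def by (elim conjE) assumption
  then have tr: "\<And>x y z. R x y \<Longrightarrow> R y z \<Longrightarrow> R x z" by blast
  show ?case unfolding ksat.simps
  proof (intro allI impI)
    fix v assume "R w' v" "ksat W R g v a"
    moreover have "R w v" using tr Imp.prems(1) \<open>R w' v\<close> by blast
    ultimately show "ksat W R g v b" using Imp.prems(2) by simp
  qed
qed

theorem theorem5p3: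
  fixes W :: "'w set" and R :: "'w \<Rightarrow> 'w \<Rightarrow> bool"
    and g :: "'v::countable \<Rightarrow> 'w set" and wT :: 'w
  assumes "l5_frame W R"
    and "frame_assignment W R g"
    and "r_maximal W R wT"
  shows "\<exists>(M :: 'w set set) TRUE fbot ftop fimp for fand fbox (\<gamma> :: 'v \<Rightarrow> 'w set).
           l5_model M TRUE fbot ftop fimp for fand fbox \<and>
           (\<forall>x. \<gamma> x \<in> M) \<and>
           (\<forall>\<phi>. meval fbot fimp for fand fbox \<gamma> \<phi> \<in> TRUE \<longleftrightarrow> ksat W R g wT \<phi>)"
proof -
  note fr = assms(1) and ga = assms(2) and mx = assms(3)
  have fr': "W \<noteq> {} \<and>
     (\<forall>x y. R x y \<longrightarrow> x \<in> W \<and> y \<in> W) \<and>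
     (\<forall>x\<in>W. R x x) \<and>
     (\<forall>x y z. R x y \<longrightarrow> R y z \<longrightarrow> R x z) \<and>
     (\<forall>x y. R x y \<longrightarrow> R y x \<longrightarrow> x = y) \<and>
     (\<exists>b\<in>W. \<forall>w\<in>W. R b w)" using fr unfolding l5_frame_def by (elim conjE) (intro conjI)
  have RW: "\<And>x y. R x y \<Longrightarrow> x \<in> W \<and> y \<in> W" using fr' by blast
  have refl: "\<And>x. x \<in> W \<Longrightarrow> R x x" using fr' by blast
  have trans: "\<And>x y z. R x y \<Longrightarrow> R y z \<Longrightarrow> R x z" using fr' by blast
  have anti: "\<And>x y. R x y \<Longrightarrow> R y x \<Longrightarrow> x = y" using fr' by blast
  obtain b where b: "b \<in> W" "\<forall>w\<in>W. R b w" using fr' by blast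
  have bw: "bottom_world W R = b"
    unfolding bottom_world_def
    by (rule the_equality) (use b anti in auto)
  define M where "M = {A. A \<subseteq> W \<and> (\<forall>w w'. R w w' \<longrightarrow> w \<in> A \<longrightarrow> w' \<in> A)}"
  define TRUE where "TRUE = {A\<in>M. wT \<in> A}"
  define fimp where "fimp = (\<lambda>A B. {w\<in>W. \<forall>w'. R w w' \<longrightarrow> w' \<in> A \<longrightarrow> w' \<in> B})"
  define fbox where "fbox = (\<lambda>A. if A = W then W else ({}::'w set))"
  define ext where "ext = (\<lambda>\<phi>. {w\<in>W. ksat W R g w \<phi>})"
  have hle: "\<And>a b. hle (\<inter>) a b \<longleftrightarrow> a \<subseteq> b" unfolding hle_def by auto
  have gW: "\<And>x. g x \<subseteq> W" and gU: "\<And>x w w'. R w w' \<Longrightarrow> w \<in> g x \<Longrightarrow> w' \<in> g x"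
    using ga unfolding frame_assignment_def by blast+
  have WM: "W \<in> M" unfolding M_def using RW by auto
  have eM: "{} \<in> M" unfolding M_def by auto
  have impM: "\<And>A B. fimp A B \<in> M" unfolding M_def fimp_def using RW trans by blast
  have unM: "\<And>A B. A \<in> M \<Longrightarrow> B \<in> M \<Longrightarrow> A \<union> B \<in> M" unfolding M_def by blast
  have inM: "\<And>A B. A \<in> M \<Longrightarrow> B \<in> M \<Longrightarrow> A \<inter> B \<in> M" unfolding M_def by blast
  have boxM: "\<And>A. fbox A \<in> M" unfolding fbox_def using WM eM by auto
  have upW: "\<And>A. A \<in> M \<Longrightarrow> b \<in> A \<Longrightarrow> A = W" unfolding M_def using b by blast
  have impW: "\<And>A B. A \<in> M \<Longrightarrow> fimp A B = W \<longleftrightarrow> A \<subseteq> B"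
  proof -
    fix A B assume A: "A \<in> M"
    show "fimp A B = W \<longleftrightarrow> A \<subseteq> B"
    proof
      assume "fimp A B = W"
      then show "A \<subseteq> B" using A refl unfolding fimp_def M_def by blast
    next
      assume "A \<subseteq> B" then show "fimp A B = W" unfolding fimp_def using RW by blast
    qed
  qed
  have res: "\<And>a c c'. a \<in> M \<Longrightarrow> c \<in> M \<Longrightarrow> c' \<in> M \<Longrightarrow> a \<inter> c \<subseteq> c' \<longleftrightarrow> a \<subseteq> fimp c c'"
    unfolding M_def fimp_def using refl by blast
  have sW: "\<And>a. a \<in> M \<Longrightarrow> a \<subseteq> W" unfolding M_def by blast
  have ha: "heyting_algebra M {} W fimp (\<union>) (\<inter>)"
    unfolding heyting_algebra_def hle
  proof (intro conjI ballI)
    show "{} \<in> M" by (rule eM)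
    show "W \<in> M" by (rule WM)
    fix a assume a: "a \<in> M"
    show "{} \<subseteq> a" by simp
    show "a \<subseteq> W" using sW a by simp
    fix c assume c: "c \<in> M"
    show "fimp a c \<in> M" by (rule impM)
    show "a \<union> c \<in> M" using unM a c by simp
    show "a \<inter> c \<in> M" using inM a c by simp
    show "a \<union> c = c \<union> a" by (rule Un_commute)
    show "a \<inter> c = c \<inter> a" by (rule Int_commute)
    show "a \<union> (a \<inter> c) = a" by blast
    show "a \<inter> (a \<union> c) = a" by blast
    fix d assume d: "d \<in> M"
    show "a \<union> c \<union> d = a \<union> (c \<union> d)" by blast
    show "a \<inter> c \<inter> d = a \<inter> (c \<inter> d)" by blast
    show "(a \<inter> c \<subseteq> d) = (a \<subseteq> fimp c d)" using res a c d by simp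
  qed
  have fl: "\<And>F. hfilter M W (\<inter>) F \<longleftrightarrow> F \<subseteq> M \<and> W \<in> F \<and> (\<forall>a\<in>F. \<forall>b\<in>F. a \<inter> b \<in> F) \<and> (\<forall>a\<in>F. \<forall>b\<in>M. a \<subseteq> b \<longrightarrow> b \<in> F)"
    unfolding hfilter_def hle by simp
  have wTW: "wT \<in> W" using mx unfolding r_maximal_def by blast
  have sM: "{wT} \<in> M" unfolding M_def using mx RW unfolding r_maximal_def by blast
  have uf: "ultrafilter M {} W (\<inter>) TRUE"
    unfolding ultrafilter_def fl
  proof (intro conjI allI impI)
    show "TRUE \<subseteq> M" unfolding TRUE_def by auto
    show "W \<in> TRUE" unfolding TRUE_def using WM wTW by auto
    show "\<forall>a\<in>TRUE. \<forall>b\<in>TRUE. a \<inter> b \<in> TRUE" unfolding TRUE_def using inM by auto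
    show "\<forall>a\<in>TRUE. \<forall>b\<in>M. a \<subseteq> b \<longrightarrow> b \<in> TRUE" unfolding TRUE_def by auto
    show "{} \<notin> TRUE" unfolding TRUE_def by auto
  next
    fix F assume F: "F \<subseteq> M \<and> W \<in> F \<and> (\<forall>a\<in>F. \<forall>b\<in>F. a \<inter> b \<in> F) \<and> (\<forall>a\<in>F. \<forall>b\<in>M. a \<subseteq> b \<longrightarrow> b \<in> F)"
      and ne: "{} \<notin> F" and sub: "TRUE \<subseteq> F"
    have "{wT} \<in> F" using sub sM unfolding TRUE_def by auto
    have "F \<subseteq> TRUE"
    proof
      fix A assume "A \<in> F"
      then have "A \<inter> {wT} \<in> F" using F \<open>{wT} \<in> F\<close> by blast
      then have "wT \<in> A" using ne by (cases "wT \<in> A") auto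
      then show "A \<in> TRUE" using F \<open>A \<in> F\<close> unfolding TRUE_def by auto
    qed
    then show "F = TRUE" using sub by auto
  qed
  have c1: "\<forall>m\<in>M. fbox m \<in> M" using boxM by blast
  have c2: "\<forall>m\<in>M. hle (\<inter>) (fbox m) m" unfolding hle fbox_def by simp
  have c3: "\<forall>m\<in>M. \<forall>m'\<in>M. \<forall>m''\<in>M.
        hle (\<inter>) (fbox (fimp m m')) (fimp (fbox (fimp m' m'')) (fbox (fimp m m'')))"
  proof (intro ballI)
    fix m m' m'' assume m: "m \<in> M" and m': "m' \<in> M" and m'': "m'' \<in> M"
    show "hle (\<inter>) (fbox (fimp m m')) (fimp (fbox (fimp m' m'')) (fbox (fimp m m'')))"
    proof (cases "fimp m m' = W \<and> fimp m' m'' = W")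
      case True
      then have "m \<subseteq> m'" "m' \<subseteq> m''" using impW m m' by blast+
      then have "fimp m m'' = W" using impW m by blast
      then have "fbox (fimp m m'') = W" unfolding fbox_def by simp
      then have "fimp (fbox (fimp m' m'')) (fbox (fimp m m'')) = W"
        unfolding fimp_def using RW by blast
      moreover have "fbox (fimp m m') \<subseteq> W" unfolding fbox_def by simp
      ultimately show ?thesis unfolding hle by simp
    next
      case False
      then have "fbox (fimp m m') = {} \<or> fbox (fimp m' m'') = {}" unfolding fbox_def by simp
      then show ?thesis
      proof
        assume "fbox (fimp m m') = {}" then show ?thesis unfolding hle by simp
      next
        assume e: "fbox (fimp m' m'') = {}"
        have "fimp {} X = W" for X unfolding fimp_def using RW by blast
        then show ?thesis unfolding hle e using boxM[unfolded M_def] by blast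
      qed
    qed
  qed
  have c4: "\<forall>m\<in>M. \<forall>m'\<in>M. hle (\<inter>) (fbox (m \<union> m')) (fbox m \<union> fbox m')"
  proof (intro ballI)
    fix m m' assume m: "m \<in> M" and m': "m' \<in> M"
    show "hle (\<inter>) (fbox (m \<union> m')) (fbox m \<union> fbox m')"
    proof (cases "m \<union> m' = W")
      case True
      then have "b \<in> m \<or> b \<in> m'" using b by blast
      then have "m = W \<or> m' = W" using upW m m' by blast
      then show ?thesis unfolding hle fbox_def by auto
    next
      case False then show ?thesis unfolding hle fbox_def by simp
    qed
  qed
  have c5: "\<forall>m\<in>M. fbox m \<in> TRUE \<longleftrightarrow> m = W" unfolding fbox_def TRUE_def using WM wTW by simp
  have c6: "\<forall>m\<in>M. fbox m = (if m = W then W else {})" unfolding fbox_def by simp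
  have lm: "l5_model M TRUE {} W fimp (\<union>) (\<inter>) fbox"
    unfolding l5_model_def using ha uf c1 c2 c3 c4 c5 c6 by (intro conjI) assumption+
  have ev: "meval {} fimp (\<union>) (\<inter>) fbox g \<phi> = ext \<phi>" for \<phi>
  proof (induction \<phi>)
    case (Var x)
    have "ext (Var x) = g x" unfolding ext_def using gW by auto
    then show ?case by simp
  next
    case Bot then show ?case unfolding ext_def by simp
  next
    case (And a c)
    have "ext (And a c) = ext a \<inter> ext c" unfolding ext_def by auto
    then show ?case using And by simp
  next
    case (Or a c)
    have "ext (Or a c) = ext a \<union> ext c" unfolding ext_def by auto
    then show ?case using Or by simp
  next
    case (Imp a c)
    have "ext (Imp a c) = fimp (ext a) (ext c)"
    proof
      show "ext (Imp a c) \<subseteq> fimp (ext a) (ext c)" unfolding ext_def fimp_def by auto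
      show "fimp (ext a) (ext c) \<subseteq> ext (Imp a c)"
      proof
        fix w assume w: "w \<in> fimp (ext a) (ext c)"
        then have wW: "w \<in> W" unfolding fimp_def by simp
        have "ksat W R g w (Imp a c)" unfolding ksat.simps
        proof (intro allI impI)
          fix v assume "R w v" "ksat W R g v a"
          then have "v \<in> ext a" using RW unfolding ext_def by blast
          then have "v \<in> ext c" using w \<open>R w v\<close> unfolding fimp_def by blast
          then show "ksat W R g v c" unfolding ext_def by simp
        qed
        then show "w \<in> ext (Imp a c)" using wW unfolding ext_def by simp
      qed
    qed
    then show ?case using Imp by simp
  next
    case (Box a)
    have e: "ext a = W \<longleftrightarrow> ksat W R g b a"
    proof
      assume "ext a = W" then show "ksat W R g b a" using b(1) unfolding ext_def by blast
    next
      assume kb: "ksat W R g b a"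
      have "\<And>w. w \<in> W \<Longrightarrow> ksat W R g w a" using persist[OF fr ga] kb b(2) by blast
      then show "ext a = W" unfolding ext_def by blast
    qed
    have "ext (Box a) = (if ksat W R g b a then W else {})" unfolding ext_def by (simp add: bw)
    then show ?case using Box e unfolding fbox_def by simp
  qed
  have gM: "\<forall>x. g x \<in> M" using gW gU unfolding M_def by blast
  have "\<forall>\<phi>. meval {} fimp (\<union>) (\<inter>) fbox g \<phi> \<in> TRUE \<longleftrightarrow> ksat W R g wT \<phi>"
  proof
    fix \<phi>
    have s1: "ext \<phi> \<subseteq> W" unfolding ext_def by blast
    have s2: "\<forall>w w'. R w w' \<longrightarrow> w \<in> ext \<phi> \<longrightarrow> w' \<in> ext \<phi>"
      unfolding ext_def using persist[OF fr ga] RW by blast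
    have "ext \<phi> \<in> M" unfolding M_def using s1 s2 by blast
    then show "meval {} fimp (\<union>) (\<inter>) fbox g \<phi> \<in> TRUE \<longleftrightarrow> ksat W R g wT \<phi>"
      unfolding ev TRUE_def using wTW unfolding ext_def by simp
  qed
  then show ?thesis using lm gM by blast
qed

end
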